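(* Let $(H,e)$ be a unital Hilbert space. Then, with respect to the matrix pairing between $M(H)$ and $M(\overline H)$, $(\max\overline{\mathfrak c_e})^\boxdot=\min\mathfrak c_e$ and $(\min\overline{\mathfrak c_e})^\boxdot=\max\mathfrak c_e$.
   Context: A Hilbert $*$-space is a complex Hilbert space $H$ (inner product linear in the first variable) with a conjugate-linear map $\zeta\mapsto\zeta^*$, $\zeta^{**}=\zeta$, $(\zeta^*,\eta^* )=\overline{(\zeta,\eta)}$. A unital Hilbert space $(H,e)$ has a fixed hermitian unit vector $e$, and unital cone $\mathfrak c_e=\{\zeta\in H_h:\|\zeta\|\le\sqrt2(\zeta,e)\}$. The conjugate space $\overline H$ (vectors $\bar\eta$, $\lambda\bar\eta=\overline{\bar\lambda\eta}$, $(\bar\zeta,\bar\eta)=\overline{(\zeta,\eta)}$, involution $\bar\eta^*=\overline{\eta^*}$) is a unital Hilbert space with unit $\bar e$ and cone $\overline{\mathfrak c_e}=\{\bar\zeta:\zeta\in\mathfrak c_e\}$; $H,\overline H$ are paired by $\langle\zeta,\bar\eta\rangle=(\zeta,\eta)$. Matrices over $H$ or $\overline H$ carry the involution $[x_{ij}]^*=[x_{ji}^*]$. Matrix pairing: for $\zeta\in M_m(H)$, $\bar\eta=[\overline{\eta_{st}}]\in M_n(\overline H)$, $\langle\langle\zeta,\bar\eta\rangle\rangle=[(\zeta_{ik},\eta_{jl})]_{(i,j),(k,l)}\in M_{mn}$. Quantum polar of a family $\mathfrak M$ of matrices over $H$: $\mathfrak M^\boxdot=\{\bar\eta\in M_n(\overline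 H)_h, n\ge1:\langle\langle\zeta,\bar\eta\rangle\rangle\ge0\ \forall\zeta\in\mathfrak M\}$; symmetrically, for a family $\mathfrak N$ over $\overline H$, $\mathfrak N^\boxdot=\{\zeta\in M_n(H)_h:\langle\langle\zeta,\bar\eta\rangle\rangle\ge0\ \forall\bar\eta\in\mathfrak N\}$ (a set of vectors is a family at level $1$). For a unital Hilbert space $(K,u)$ with cone $\mathfrak c_u$: a state is a linear functional $\sigma$ on $K$ with $\sigma(u)=1$, $\sigma(\mathfrak c_u)\ge0$; $\min\mathfrak c_u\cap M_n(K)=\{x\in M_n(K)_h:[\sigma(x_{ij})]\ge0\ \forall$ states $\sigma\}$; $\max\mathfrak c_u=\mathfrak c_u^{\boxdot\boxdot}$. These apply to $(H,e)$ and to $(\overline H,\bar e)$. *)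

theory Defs
  imports Complex_Main
begin

record 'h hsp =
  hscal :: "complex \<Rightarrow> 'h \<Rightarrow> 'h"
  hip   :: "'h \<Rightarrow> 'h \<Rightarrow> complex"
  hstar :: "'h \<Rightarrow> 'h"

definition hnorm :: "('h, 'z) hsp_scheme \<Rightarrow> 'h \<Rightarrow> real" where
  "hnorm H x = sqrt (Re (hip H x x))"

definition complex_vspace :: "('h::ab_group_add) hsp \<Rightarrow> bool" where
  "complex_vspace H \<longleftrightarrow>
     (\<forall>x. hscal H 1 x = x) \<and>
     (\<forall>a b x. hscal H a (hscal H b x) = hscal H (a * b) x) \<and>
     (\<forall>a x y. hscal H a (x + y) = hscal H a x + hscal H a y) \<and>
     (\<forall>a b x. hscal H (a + b) x = hscal H a x + hscal H b x)"

definition inner_product_space :: "('h::ab_group_add) hsp \<Rightarrow> bool" where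
  "inner_product_space H \<longleftrightarrow> complex_vspace H \<and>
     (\<forall>x y z. hip H (x + y) z = hip H x z + hip H y z) \<and>
     (\<forall>a x y. hip H (hscal H a x) y = a * hip H x y) \<and>
     (\<forall>x y. hip H y x = cnj (hip H x y)) \<and>
     (\<forall>x. Im (hip H x x) = 0 \<and> 0 \<le> Re (hip H x x)) \<and>
     (\<forall>x. hip H x x = 0 \<longrightarrow> x = 0)"

definition complete_hsp :: "('h::ab_group_add) hsp \<Rightarrow> bool" where
  "complete_hsp H \<longleftrightarrow>
     (\<forall>X :: nat \<Rightarrow> 'h.
        (\<forall>\<epsilon>>0. \<exists>N. \<forall>m\<ge>N. \<forall>n\<ge>N. hnorm H (X m - X n) < \<epsilon>) \<longrightarrow>
        (\<exists>L. (\<lambda>n. hnorm H (X n - L)) \<longlonglongrightarrow> 0))"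

definition hilbert_star_space :: "('h::ab_group_add) hsp \<Rightarrow> bool" where
  "hilbert_star_space H \<longleftrightarrow> inner_product_space H \<and> complete_hsp H \<and>
     (\<forall>x y. hstar H (x + y) = hstar H x + hstar H y) \<and>
     (\<forall>a x. hstar H (hscal H a x) = hscal H (cnj a) (hstar H x)) \<and>
     (\<forall>x. hstar H (hstar H x) = x) \<and>
     (\<forall>x y. hip H (hstar H x) (hstar H y) = cnj (hip H x y))"

definition hermitian_part :: "('h::ab_group_add) hsp \<Rightarrow> 'h set" where
  "hermitian_part H = {x. hstar H x = x}"

definition unital_hilbert_space :: "('h::ab_group_add) hsp \<Rightarrow> 'h \<Rightarrow> bool" where
  "unital_hilbert_space H e \<longleftrightarrow> hilbert_star_space H \<and> e \<in> hermitian_part H \<and> hnorm H e = 1"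

text \<open>Unital cone.  For hermitian \<zeta> the number (\<zeta>,e) is real.\<close>
definition unital_cone :: "('h::ab_group_add) hsp \<Rightarrow> 'h \<Rightarrow> 'h set" where
  "unital_cone H e = {z \<in> hermitian_part H. hnorm H z \<le> sqrt 2 * Re (hip H z e)}"

text \<open>The conjugate space, realised on the same additive group: the vector \<open>\<eta>\<close> plays
  the role of \<open>\<eta>-bar\<close>; \<open>\<lambda>\<cdot>\<eta>-bar = (cnj \<lambda> \<cdot> \<eta>)-bar\<close>,
  \<open>(\<zeta>-bar,\<eta>-bar) = cnj (\<zeta>,\<eta>)\<close>, \<open>\<eta>-bar* = (\<eta>*)-bar\<close>.\<close>
definition conj_space :: "('h::ab_group_add) hsp \<Rightarrow> 'h hsp" where
  "conj_space H = \<lparr>hscal = (\<lambda>a x. hscal H (cnj a) x),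
                   hip = (\<lambda>x y. cnj (hip H x y)),
                   hstar = hstar H\<rparr>"

text \<open>An n\<times>n matrix over 'h is a function nat \<Rightarrow> nat \<Rightarrow> 'h vanishing outside {..<n}\<times>{..<n}.
  A family of matrices (of varying sizes n \<ge> 1) is a set of pairs (n, x).\<close>

definition mats :: "nat \<Rightarrow> (nat \<Rightarrow> nat \<Rightarrow> 'h::zero) set" where
  "mats n = {x. \<forall>i j. (n \<le> i \<or> n \<le> j) \<longrightarrow> x i j = 0}"

definition hermitian_mat :: "('h::ab_group_add) hsp \<Rightarrow> nat \<Rightarrow> (nat \<Rightarrow> nat \<Rightarrow> 'h) \<Rightarrow> bool" where
  "hermitian_mat H n x \<longleftrightarrow> (\<forall>i<n. \<forall>j<n. x i j = hstar H (x j i))"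

definition psd_on :: "'i set \<Rightarrow> ('i \<Rightarrow> 'i \<Rightarrow> complex) \<Rightarrow> bool" where
  "psd_on I A \<longleftrightarrow> (\<forall>v :: 'i \<Rightarrow> complex.
      let q = (\<Sum>p\<in>I. \<Sum>r\<in>I. cnj (v p) * A p r * v r) in Im q = 0 \<and> 0 \<le> Re q)"

text \<open>Matrix pairing \<open>\<langle>\<langle>\<zeta>, \<eta>-bar\<rangle>\<rangle> = [(\<zeta>_ik, \<eta>_jl)]_{(i,j),(k,l)}\<close> in M_{mn}, which is
  positive iff psd on the index set {..<m}\<times>{..<n}.\<close>
definition mat_pairing :: "('h, 'z) hsp_scheme \<Rightarrow> (nat \<Rightarrow> nat \<Rightarrow> 'h) \<Rightarrow> (nat \<Rightarrow> nat \<Rightarrow> 'h)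
     \<Rightarrow> (nat \<times> nat) \<Rightarrow> (nat \<times> nat) \<Rightarrow> complex" where
  "mat_pairing H z y = (\<lambda>(i, j) (k, l). hip H (z i k) (y j l))"

definition pairing_pos :: "('h::ab_group_add) hsp \<Rightarrow> nat \<Rightarrow> (nat \<Rightarrow> nat \<Rightarrow> 'h) \<Rightarrow> nat \<Rightarrow> (nat \<Rightarrow> nat \<Rightarrow> 'h) \<Rightarrow> bool" where
  "pairing_pos H m z n y \<longleftrightarrow> psd_on ({..<m} \<times> {..<n}) (mat_pairing H z y)"

text \<open>Quantum polar of a family over H: a family over conj H.\<close>
definition qpolar :: "('h::ab_group_add) hsp \<Rightarrow> (nat \<times> (nat \<Rightarrow> nat \<Rightarrow> 'h)) set
     \<Rightarrow> (nat \<times> (nat \<Rightarrow> nat \<Rightarrow> 'h)) set" where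
  "qpolar H M = {(n, y). 1 \<le> n \<and> y \<in> mats n \<and> hermitian_mat (conj_space H) n y \<and>
                    (\<forall>(m, z) \<in> M. pairing_pos H m z n y)}"

text \<open>Quantum polar of a family over conj H: a family over H.\<close>
definition qpolar_bar :: "('h::ab_group_add) hsp \<Rightarrow> (nat \<times> (nat \<Rightarrow> nat \<Rightarrow> 'h)) set
     \<Rightarrow> (nat \<times> (nat \<Rightarrow> nat \<Rightarrow> 'h)) set" where
  "qpolar_bar H N = {(n, z). 1 \<le> n \<and> z \<in> mats n \<and> hermitian_mat H n z \<and>
                    (\<forall>(m, y) \<in> N. pairing_pos H n z m y)}"

definition level1 :: "('h::zero) set \<Rightarrow> (nat \<times> (nat \<Rightarrow> nat \<Rightarrow> 'h)) set" where
  "level1 S = {(1, \<lambda>i j. if i = 0 \<and> j = 0 then z else 0) | z. z \<in> S}"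

definition state :: "('h::ab_group_add) hsp \<Rightarrow> 'h \<Rightarrow> ('h \<Rightarrow> complex) \<Rightarrow> bool" where
  "state K u \<sigma> \<longleftrightarrow>
     (\<forall>x y. \<sigma> (x + y) = \<sigma> x + \<sigma> y) \<and> (\<forall>a x. \<sigma> (hscal K a x) = a * \<sigma> x) \<and>
     \<sigma> u = 1 \<and> (\<forall>z \<in> unital_cone K u. Im (\<sigma> z) = 0 \<and> 0 \<le> Re (\<sigma> z))"

definition min_cone :: "('h::ab_group_add) hsp \<Rightarrow> 'h \<Rightarrow> (nat \<times> (nat \<Rightarrow> nat \<Rightarrow> 'h)) set" where
  "min_cone K u = {(n, x). 1 \<le> n \<and> x \<in> mats n \<and> hermitian_mat K n x \<and>
      (\<forall>\<sigma>. state K u \<sigma> \<longrightarrow> psd_on {..<n} (\<lambda>i j. \<sigma> (x i j)))}"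

text \<open>max c_e = c_e^{\<boxdot>\<boxdot>} for (H,e) and max of the conjugate cone for (conj H, e-bar).\<close>
definition max_cone :: "('h::ab_group_add) hsp \<Rightarrow> 'h \<Rightarrow> (nat \<times> (nat \<Rightarrow> nat \<Rightarrow> 'h)) set" where
  "max_cone H e = qpolar_bar H (qpolar H (level1 (unital_cone H e)))"

definition max_cone_bar :: "('h::ab_group_add) hsp \<Rightarrow> 'h \<Rightarrow> (nat \<times> (nat \<Rightarrow> nat \<Rightarrow> 'h)) set" where
  "max_cone_bar H e = qpolar H (qpolar_bar H (level1 (unital_cone (conj_space H) e)))"

end

theory Submission
  imports Defs
begin

locale hs =
  fixes H :: "('h::ab_group_add) hsp"
  assumes hs: "hilbert_star_space H"
begin

lemma ips: "inner_product_space H" using hs by (simp add: hilbert_star_space_def)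
lemma cvs: "complex_vspace H" using ips by (simp add: inner_product_space_def)

lemma scal_one[simp]: "hscal H 1 x = x" using cvs by (simp add: complex_vspace_def)
lemma scal_assoc[simp]: "hscal H a (hscal H b x) = hscal H (a * b) x" using cvs by (simp add: complex_vspace_def)
lemma scal_add_right: "hscal H a (x + y) = hscal H a x + hscal H a y" using cvs by (simp add: complex_vspace_def)
lemma scal_add_left: "hscal H (a + b) x = hscal H a x + hscal H b x" using cvs by (simp add: complex_vspace_def)
lemma scal_zero_left[simp]: "hscal H 0 x = 0"
proof -
  have "hscal H 0 x = hscal H 0 x + hscal H 0 x" using scal_add_left[of 0 0 x] by simp
  then show ?thesis by simp
qed
lemma scal_zero_right[simp]: "hscal H a 0 = 0"
proof -
  have "hscal H a 0 = hscal H a 0 + hscal H a 0" using scal_add_right[of a 0 0] by simp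
  then show ?thesis by simp
qed
lemma scal_minus_left: "hscal H (- a) x = - hscal H a x"
proof -
  have "hscal H a x + hscal H (- a) x = 0" using scal_add_left[of a "-a" x] by simp
  then show ?thesis by (simp add: eq_neg_iff_add_eq_0 add.commute)
qed

lemma ip_add_left: "hip H (x + y) z = hip H x z + hip H y z" using ips unfolding inner_product_space_def by blast
lemma ip_scal_left: "hip H (hscal H a x) y = a * hip H x y" using ips unfolding inner_product_space_def by blast
lemma ip_sym: "hip H y x = cnj (hip H x y)" using ips unfolding inner_product_space_def by blast
lemma ip_pos: "Im (hip H x x) = 0" "0 \<le> Re (hip H x x)" using ips unfolding inner_product_space_def by blast+
lemma ip_zero_imp: "hip H x x = 0 \<Longrightarrow> x = 0" using ips unfolding inner_product_space_def by blast
lemma ip_add_right: "hip H z (x + y) = hip H z x + hip H z y"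
  by (subst ip_sym, subst (2) ip_sym, subst (3) ip_sym) (simp add: ip_add_left)
lemma ip_scal_right: "hip H x (hscal H a y) = cnj a * hip H x y"
  by (subst ip_sym, subst (2) ip_sym) (simp add: ip_scal_left)
lemma ip_zero_left[simp]: "hip H 0 y = 0"
  using ip_scal_left[of 0 0 y] by simp
lemma ip_zero_right[simp]: "hip H y 0 = 0"
  using ip_sym[of 0 y] by simp
lemma ip_minus_left: "hip H (- x) y = - hip H x y"
proof -
  have "hip H x y + hip H (- x) y = 0" using ip_add_left[of x "-x" y] by simp
  then have "- hip H x y = hip H (- x) y" by (rule minus_unique)
  then show ?thesis by simp
qed
lemma ip_minus_right: "hip H y (- x) = - hip H y x"
proof -
  have "hip H y x + hip H y (- x) = 0" using ip_add_right[of y x "-x"] by simp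
  then have "- hip H y x = hip H y (- x)" by (rule minus_unique)
  then show ?thesis by simp
qed
lemma ip_diff_left: "hip H (x - y) z = hip H x z - hip H y z"
  by (simp only: diff_conv_add_uminus ip_add_left ip_minus_left)
lemma ip_diff_right: "hip H z (x - y) = hip H z x - hip H z y"
  by (simp only: diff_conv_add_uminus ip_add_right ip_minus_right)
lemma ip_sum_right: "finite S \<Longrightarrow> hip H z (sum f S) = (\<Sum>i\<in>S. hip H z (f i))"
  by (induction S rule: finite_induct) (simp_all add: ip_add_right)

lemmas ip_simps = ip_add_left ip_add_right ip_scal_left ip_scal_right ip_diff_left ip_diff_right
  ip_minus_left ip_minus_right

lemma star_add: "hstar H (x + y) = hstar H x + hstar H y" using hs by (simp add: hilbert_star_space_def)
lemma star_scal: "hstar H (hscal H a x) = hscal H (cnj a) (hstar H x)" using hs by (simp add: hilbert_star_space_def)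
lemma star_star[simp]: "hstar H (hstar H x) = x" using hs by (simp add: hilbert_star_space_def)
lemma star_ip: "hip H (hstar H x) (hstar H y) = cnj (hip H x y)" using hs by (simp add: hilbert_star_space_def)
lemma star_zero[simp]: "hstar H 0 = 0"
  using star_add[of 0 0] by simp
lemma star_minus: "hstar H (- x) = - hstar H x"
proof -
  have "hstar H x + hstar H (- x) = 0" using star_add[of x "-x"] by simp
  then have "- hstar H x = hstar H (- x)" by (rule minus_unique)
  then show ?thesis by simp
qed
lemma star_diff: "hstar H (x - y) = hstar H x - hstar H y"
  by (simp only: diff_conv_add_uminus star_add star_minus)
lemma star_sum: "hstar H (sum f S) = (\<Sum>i\<in>S. hstar H (f i))"
  by (induction S rule: infinite_finite_induct) (simp_all add: star_add)


lemma herm_real: "hstar H x = x \<Longrightarrow> hstar H y = y \<Longrightarrow> Im (hip H x y) = 0"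
proof -
  assume a: "hstar H x = x" "hstar H y = y"
  have h: "hip H x y = cnj (hip H x y)" using star_ip[of x y] a by simp
  have "Im (hip H x y) = Im (cnj (hip H x y))" using arg_cong[OF h, of Im] .
  then show ?thesis by simp
qed

lemma ip_self_zero: "Re (hip H x x) \<le> 0 \<Longrightarrow> x = 0"
  using ip_pos[of x] ip_zero_imp[of x] by (simp add: complex_eq_iff)

end

lemma sqrt_le_iff_aux:
  fixes R a :: real
  assumes "0 \<le> R"
  shows "sqrt R \<le> sqrt 2 * a \<longleftrightarrow> 0 \<le> a \<and> R \<le> 2 * a^2"
proof
  assume h: "sqrt R \<le> sqrt 2 * a"
  have "0 \<le> sqrt 2 * a" using h real_sqrt_ge_zero[OF assms] by linarith
  then have a0: "0 \<le> a" by (simp add: zero_le_mult_iff)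
  have "(sqrt R)^2 \<le> (sqrt 2 * a)^2" by (rule power_mono[OF h real_sqrt_ge_zero[OF assms]])
  then show "0 \<le> a \<and> R \<le> 2 * a^2" using a0 assms by (simp add: power_mult_distrib)
next
  assume h: "0 \<le> a \<and> R \<le> 2 * a^2"
  have "sqrt R \<le> sqrt (2 * a^2)" using h by simp
  also have "\<dots> = sqrt 2 * a" using h by (simp add: real_sqrt_mult)
  finally show "sqrt R \<le> sqrt 2 * a" .
qed

locale uhs = hs +
  fixes e
  assumes he: "hstar H e = e" and ne: "hnorm H e = 1"
begin

lemma ee[simp]: "hip H e e = 1"
proof -
  have "Re (hip H e e) = 1" using ne ip_pos[of e] by (simp add: hnorm_def)
  then show ?thesis using ip_pos[of e] by (simp add: complex_eq_iff)
qed

lemma cone_iff: "x \<in> unital_cone H e \<longleftrightarrow>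
   hstar H x = x \<and> 0 \<le> Re (hip H x e) \<and> Re (hip H x x) \<le> 2 * (Re (hip H x e))^2"
  unfolding unital_cone_def hermitian_part_def hnorm_def
  using sqrt_le_iff_aux[OF ip_pos(2)[of x]] by auto

lemma e_cone: "e \<in> unital_cone H e"
  by (simp add: cone_iff he)

lemma decomp:
  assumes "hstar H x = x"
  defines "a \<equiv> Re (hip H x e)"
  shows "\<exists>x'. x = x' + hscal H (complex_of_real a) e \<and> hip H x' e = 0 \<and> hip H e x' = 0
     \<and> hstar H x' = x' \<and> hip H x e = complex_of_real a \<and> hip H e x = complex_of_real a"
proof -
  have r: "hip H x e = complex_of_real a"
    using herm_real[OF assms(1) he] a_def by (simp add: complex_eq_iff)
  have r2: "hip H e x = complex_of_real a" using r ip_sym[of e x] by simp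
  define x' where "x' = x - hscal H (complex_of_real a) e"
  have "hip H x' e = 0" using r by (simp add: x'_def ip_simps)
  moreover have "hip H e x' = 0" using r2 by (simp add: x'_def ip_simps)
  moreover have "hstar H x' = x'" using assms(1) he by (simp add: x'_def star_diff star_scal)
  moreover have "x = x' + hscal H (complex_of_real a) e" by (simp add: x'_def)
  ultimately show ?thesis using r r2 by blast
qed

lemma dual1:
  assumes z: "z \<in> unital_cone H e" and c: "c \<in> unital_cone H e"
  shows "Im (hip H z c) = 0 \<and> 0 \<le> Re (hip H z c)"
proof -
  have zh: "hstar H z = z" and ch: "hstar H c = c" using z c by (auto simp: cone_iff)
  have im: "Im (hip H z c) = 0" using herm_real[OF zh ch] .
  define a where "a = Re (hip H z e)"
  define b where "b = Re (hip H c e)"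
  obtain z' where z': "z = z' + hscal H (complex_of_real a) e" "hip H z' e = 0" "hip H e z' = 0"
    using decomp[OF zh] a_def by blast
  obtain c' where c': "c = c' + hscal H (complex_of_real b) e" "hip H c' e = 0" "hip H e c' = 0"
    using decomp[OF ch] b_def by blast
  have a0: "0 \<le> a" and za: "Re (hip H z z) \<le> 2 * a^2" using z by (auto simp: cone_iff a_def)
  have b0: "0 \<le> b" and cb: "Re (hip H c c) \<le> 2 * b^2" using c by (auto simp: cone_iff b_def)
  show ?thesis
  proof (cases "a = 0 \<or> b = 0")
    case True
    then show ?thesis
    proof
      assume "a = 0"
      then have "z = 0" using za by (intro ip_self_zero) simp
      then show ?thesis by simp
    next
      assume "b = 0"
      then have "c = 0" using cb by (intro ip_self_zero) simp
      then show ?thesis by simp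
    qed
  next
    case False
    then have ap: "0 < a" and bp: "0 < b" using a0 b0 by auto
    define p where "p = Re (hip H z' z')"
    define q where "q = Re (hip H c' c')"
    define r where "r = Re (hip H z' c')"
    have "hip H z z = hip H z' z' + complex_of_real (a * a)"
      using z' by (simp add: ip_simps)
    then have "Re (hip H z z) = p + a * a" by (simp add: p_def)
    then have pa: "p \<le> a * a" using za by (simp add: power2_eq_square)
    have "hip H c c = hip H c' c' + complex_of_real (b * b)"
      using c' by (simp add: ip_simps)
    then have "Re (hip H c c) = q + b * b" by (simp add: q_def)
    then have qb: "q \<le> b * b" using cb by (simp add: power2_eq_square)
    have "hip H z c = hip H z' c' + complex_of_real (a * b)"
      using z' c' by (simp add: ip_simps)
    then have zc: "Re (hip H z c) = r + a * b" by (simp add: r_def)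
    define w where "w = hscal H (complex_of_real b) z' + hscal H (complex_of_real a) c'"
    have cz: "Re (hip H c' z') = r" using ip_sym[of c' z'] by (simp add: r_def)
    have "Re (hip H w w) = b * b * p + a * a * q + a * b * Re (hip H z' c') + a * b * Re (hip H c' z')"
      by (simp add: w_def ip_simps p_def q_def algebra_simps)
    then have ww: "0 \<le> b * b * p + a * a * q + 2 * a * b * r" using ip_pos(2)[of w] cz r_def by simp
    have "0 \<le> b * b * (a * a - p) + a * a * (b * b - q)" using pa qb by simp
    then have "0 \<le> 2 * a * b * (r + a * b)" using ww by (simp add: algebra_simps)
    then have "0 \<le> r + a * b" using ap bp mult_pos_pos[OF ap bp] by (simp add: zero_le_mult_iff)
    then show ?thesis using zc im by simp
  qed
qed

lemma dual2:
  assumes xh: "hstar H x = x"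
    and pos: "\<And>c. c \<in> unital_cone H e \<Longrightarrow> Im (hip H c x) = 0 \<and> 0 \<le> Re (hip H c x)"
  shows "x \<in> unital_cone H e"
proof -
  define a where "a = Re (hip H x e)"
  obtain x' where x': "x = x' + hscal H (complex_of_real a) e" "hip H x' e = 0" "hip H e x' = 0"
    "hstar H x' = x'" "hip H x e = complex_of_real a" "hip H e x = complex_of_real a"
    using decomp[OF xh] a_def by blast
  have a0: "0 \<le> a" using pos[OF e_cone] x'(6) by simp
  define t where "t = hnorm H x'"
  have t2: "t * t = Re (hip H x' x')" using ip_pos[of x'] by (simp add: t_def hnorm_def)
  have t0: "0 \<le> t" using ip_pos(2)[of x'] by (simp add: t_def hnorm_def)
  have xx: "Re (hip H x x) = t * t + a * a"
    using x' t2 by (simp add: ip_simps)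
  have ta: "t \<le> a"
  proof (cases "t = 0")
    case True then show ?thesis using a0 by simp
  next
    case False
    then have tp: "0 < t" using t0 by simp
    define c where "c = e - hscal H (complex_of_real (1 / t)) x'"
    have ch: "hstar H c = c" using he x'(4) by (simp add: c_def star_diff star_scal)
    have x'x': "hip H x' x' = complex_of_real (t * t)" using t2 ip_pos[of x'] by (simp add: complex_eq_iff)
    have "hip H c c = 2" using x'(2,3) x'x' tp by (simp add: c_def ip_simps)
    moreover have "hip H c e = 1" using x'(2,3) by (simp add: c_def ip_simps)
    ultimately have "c \<in> unital_cone H e" using ch by (simp add: cone_iff)
    then have p: "0 \<le> Re (hip H c x)" using pos by blast
    have "hip H c x = complex_of_real (a - t)"
      using x' x'x' tp by (simp add: c_def ip_simps)
    then show ?thesis using p by simp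
  qed
  have "t * t \<le> a * a" using ta t0 by (simp add: mult_mono)
  then show ?thesis using xx xh a0 by (simp add: cone_iff a_def power2_eq_square)
qed

end

lemma psd_cong: "(\<And>p r. p \<in> I \<Longrightarrow> r \<in> I \<Longrightarrow> A p r = B p r) \<Longrightarrow> psd_on I A = psd_on I B"
  unfolding psd_on_def Let_def by (simp cong: sum.cong)

lemma psd_cnj: "psd_on I A \<Longrightarrow> psd_on I (\<lambda>p r. cnj (A p r))"
  unfolding psd_on_def Let_def
proof
  fix v :: "'a \<Rightarrow> complex"
  assume h: "\<forall>v. Im (\<Sum>p\<in>I. \<Sum>r\<in>I. cnj (v p) * A p r * v r) = 0 \<and> 0 \<le> Re (\<Sum>p\<in>I. \<Sum>r\<in>I. cnj (v p) * A p r * v r)"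
  have eq: "(\<Sum>p\<in>I. \<Sum>r\<in>I. cnj (v p) * cnj (A p r) * v r)
      = cnj (\<Sum>p\<in>I. \<Sum>r\<in>I. cnj ((\<lambda>x. cnj (v x)) p) * A p r * (\<lambda>x. cnj (v x)) r)" by simp
  show "Im (\<Sum>p\<in>I. \<Sum>r\<in>I. cnj (v p) * cnj (A p r) * v r) = 0 \<and> 0 \<le> Re (\<Sum>p\<in>I. \<Sum>r\<in>I. cnj (v p) * cnj (A p r) * v r)"
    unfolding eq using h[rule_format, of "\<lambda>x. cnj (v x)"] by (simp del: cnj_sum complex_cnj_mult)
qed

lemma psd_scale: "psd_on I A \<Longrightarrow> 0 \<le> k \<Longrightarrow> psd_on I (\<lambda>p r. complex_of_real k * A p r)"
  unfolding psd_on_def Let_def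
proof
  fix v :: "'a \<Rightarrow> complex"
  assume h: "\<forall>v. Im (\<Sum>p\<in>I. \<Sum>r\<in>I. cnj (v p) * A p r * v r) = 0 \<and> 0 \<le> Re (\<Sum>p\<in>I. \<Sum>r\<in>I. cnj (v p) * A p r * v r)"
    and k: "0 \<le> k"
  have eq: "(\<Sum>p\<in>I. \<Sum>r\<in>I. cnj (v p) * (complex_of_real k * A p r) * v r)
      = complex_of_real k * (\<Sum>p\<in>I. \<Sum>r\<in>I. cnj (v p) * A p r * v r)"
    by (simp add: sum_distrib_left ac_simps)
  show "Im (\<Sum>p\<in>I. \<Sum>r\<in>I. cnj (v p) * (complex_of_real k * A p r) * v r) = 0 \<and>
        0 \<le> Re (\<Sum>p\<in>I. \<Sum>r\<in>I. cnj (v p) * (complex_of_real k * A p r) * v r)"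
    unfolding eq using h[rule_format, of v] k by simp
qed

lemma psd_reindex:
  assumes b: "bij_betw h J I" and p: "psd_on I A"
  shows "psd_on J (\<lambda>p r. A (h p) (h r))"
  unfolding psd_on_def Let_def
proof
  fix v :: "_ \<Rightarrow> complex"
  define v' where "v' = (\<lambda>x. v (the_inv_into J h x))"
  have inj: "inj_on h J" using b by (simp add: bij_betw_def)
  have vv: "\<And>q. q \<in> J \<Longrightarrow> v' (h q) = v q" using inj by (simp add: v'_def the_inv_into_f_f)
  have "(\<Sum>p\<in>I. \<Sum>r\<in>I. cnj (v' p) * A p r * v' r) = (\<Sum>p\<in>J. \<Sum>r\<in>I. cnj (v' (h p)) * A (h p) r * v' r)"
    using sum.reindex_bij_betw[OF b, of "\<lambda>p. \<Sum>r\<in>I. cnj (v' p) * A p r * v' r"] by simp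
  also have "\<dots> = (\<Sum>p\<in>J. \<Sum>r\<in>J. cnj (v' (h p)) * A (h p) (h r) * v' (h r))"
  proof (rule sum.cong[OF refl])
    fix p
    show "(\<Sum>r\<in>I. cnj (v' (h p)) * A (h p) r * v' r) = (\<Sum>r\<in>J. cnj (v' (h p)) * A (h p) (h r) * v' (h r))"
      using sum.reindex_bij_betw[OF b, of "\<lambda>r. cnj (v' (h p)) * A (h p) r * v' r"] by simp
  qed
  also have "\<dots> = (\<Sum>p\<in>J. \<Sum>r\<in>J. cnj (v p) * A (h p) (h r) * v r)"
    by (simp add: vv cong: sum.cong)
  finally have eq: "(\<Sum>p\<in>J. \<Sum>r\<in>J. cnj (v p) * A (h p) (h r) * v r) = (\<Sum>p\<in>I. \<Sum>r\<in>I. cnj (v' p) * A p r * v' r)" by simp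
  show "Im (\<Sum>p\<in>J. \<Sum>r\<in>J. cnj (v p) * A (h p) (h r) * v r) = 0 \<and> 0 \<le> Re (\<Sum>p\<in>J. \<Sum>r\<in>J. cnj (v p) * A (h p) (h r) * v r)"
    unfolding eq using p unfolding psd_on_def Let_def by blast
qed

context hs
begin

lemma pairing_sym: "pairing_pos H n y m z \<Longrightarrow> pairing_pos H m z n y"
proof -
  assume "pairing_pos H n y m z"
  then have p: "psd_on ({..<n} \<times> {..<m}) (mat_pairing H y z)" by (simp add: pairing_pos_def)
  have b: "bij_betw prod.swap ({..<m} \<times> {..<n}) ({..<n} \<times> {..<m})"
    by (rule bij_betw_byWitness[where f' = prod.swap]) auto
  have "psd_on ({..<m} \<times> {..<n}) (\<lambda>p r. cnj (mat_pairing H y z (prod.swap p) (prod.swap r)))"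
    using psd_cnj[OF psd_reindex[OF b p]] .
  moreover have "(\<lambda>p r. cnj (mat_pairing H y z (prod.swap p) (prod.swap r))) = mat_pairing H z y"
    by (auto simp: mat_pairing_def fun_eq_iff ip_sym[of "y _ _"])
  ultimately show ?thesis by (simp add: pairing_pos_def)
qed

lemma pairing_level1:
  "pairing_pos H 1 (\<lambda>i j. if i = 0 \<and> j = 0 then c else 0) n y \<longleftrightarrow> psd_on {..<n} (\<lambda>j l. hip H c (y j l))"
proof
  assume "pairing_pos H 1 (\<lambda>i j. if i = 0 \<and> j = 0 then c else 0) n y"
  then have p: "psd_on ({..<1} \<times> {..<n}) (mat_pairing H (\<lambda>i j. if i = 0 \<and> j = 0 then c else 0) y)"
    by (simp add: pairing_pos_def)
  have b: "bij_betw (\<lambda>j. (0::nat, j)) {..<n} ({..<1} \<times> {..<n})"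
    by (rule bij_betw_byWitness[where f' = snd]) auto
  show "psd_on {..<n} (\<lambda>j l. hip H c (y j l))"
    using psd_reindex[OF b p] by (simp add: mat_pairing_def)
next
  assume p: "psd_on {..<n} (\<lambda>j l. hip H c (y j l))"
  have b: "bij_betw snd ({..<1::nat} \<times> {..<n}) {..<n}"
    by (rule bij_betw_byWitness[where f' = "\<lambda>j. (0::nat, j)"]) auto
  have "psd_on ({..<1::nat} \<times> {..<n}) (\<lambda>p r. hip H c (y (snd p) (snd r)))"
    using psd_reindex[OF b p] by simp
  moreover have "psd_on ({..<1::nat} \<times> {..<n}) (\<lambda>p r. hip H c (y (snd p) (snd r)))
     = psd_on ({..<1} \<times> {..<n}) (mat_pairing H (\<lambda>i j. if i = 0 \<and> j = 0 then c else 0) y)"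
    by (rule psd_cong) (auto simp: mat_pairing_def)
  ultimately show "pairing_pos H 1 (\<lambda>i j. if i = 0 \<and> j = 0 then c else 0) n y"
    by (simp add: pairing_pos_def)
qed

lemma herm_conj[simp]: "hermitian_mat (conj_space H) n y = hermitian_mat H n y"
  by (simp add: hermitian_mat_def conj_space_def)

lemma qpolar_eq: "qpolar_bar H X = qpolar H X"
  unfolding qpolar_def qpolar_bar_def using pairing_sym by auto

definition wfam :: "(nat \<times> (nat \<Rightarrow> nat \<Rightarrow> 'h)) set \<Rightarrow> bool" where
  "wfam X \<longleftrightarrow> (\<forall>(m, z) \<in> X. 1 \<le> m \<and> z \<in> mats m \<and> hermitian_mat H m z)"

lemma polar_anti: "X \<subseteq> Y \<Longrightarrow> qpolar H Y \<subseteq> qpolar H X"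
  unfolding qpolar_def by auto

lemma wf_polar: "wfam (qpolar H X)"
  unfolding wfam_def qpolar_def by auto

lemma bipolar: "wfam X \<Longrightarrow> X \<subseteq> qpolar H (qpolar H X)"
  unfolding wfam_def qpolar_def using pairing_sym by auto

lemma triple: "wfam X \<Longrightarrow> qpolar H (qpolar H (qpolar H X)) = qpolar H X"
  using bipolar[OF wf_polar[of X]] polar_anti[OF bipolar[of X]] by blast

lemma cone_conj: "unital_cone (conj_space H) e = unital_cone H e"
  by (simp add: unital_cone_def conj_space_def hermitian_part_def hnorm_def)

lemma state_conj1: "state (conj_space H) e \<sigma> \<Longrightarrow> state H e (\<lambda>x. cnj (\<sigma> x))"
  unfolding state_def cone_conj
  by (auto simp: conj_space_def) (metis complex_cnj_cnj complex_cnj_mult)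

lemma state_conj2: "state H e \<tau> \<Longrightarrow> state (conj_space H) e (\<lambda>x. cnj (\<tau> x))"
  unfolding state_def cone_conj
  by (auto simp: conj_space_def)

lemma min_conj: "min_cone (conj_space H) e = min_cone H e"
proof -
  have eqv: "(\<forall>\<sigma>. state (conj_space H) e \<sigma> \<longrightarrow> psd_on {..<n} (\<lambda>i j. \<sigma> (x i j)))
     \<longleftrightarrow> (\<forall>\<sigma>. state H e \<sigma> \<longrightarrow> psd_on {..<n} (\<lambda>i j. \<sigma> (x i j)))" for n x
  proof
    assume h: "\<forall>\<sigma>. state (conj_space H) e \<sigma> \<longrightarrow> psd_on {..<n} (\<lambda>i j. \<sigma> (x i j))"
    show "\<forall>\<sigma>. state H e \<sigma> \<longrightarrow> psd_on {..<n} (\<lambda>i j. \<sigma> (x i j))"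
    proof (intro allI impI)
      fix \<sigma> assume "state H e \<sigma>"
      then have "psd_on {..<n} (\<lambda>i j. cnj (\<sigma> (x i j)))" using h state_conj2 by blast
      then show "psd_on {..<n} (\<lambda>i j. \<sigma> (x i j))" using psd_cnj by fastforce
    qed
  next
    assume h: "\<forall>\<sigma>. state H e \<sigma> \<longrightarrow> psd_on {..<n} (\<lambda>i j. \<sigma> (x i j))"
    show "\<forall>\<sigma>. state (conj_space H) e \<sigma> \<longrightarrow> psd_on {..<n} (\<lambda>i j. \<sigma> (x i j))"
    proof (intro allI impI)
      fix \<sigma> assume "state (conj_space H) e \<sigma>"
      then have "psd_on {..<n} (\<lambda>i j. cnj (\<sigma> (x i j)))" using h state_conj1 by blast
      then show "psd_on {..<n} (\<lambda>i j. \<sigma> (x i j))" using psd_cnj by fastforce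
    qed
  qed
  show ?thesis unfolding min_cone_def by (simp only: eqv herm_conj)
qed

end



lemma state_scal: "state K u \<sigma> \<Longrightarrow> \<sigma> (hscal K a x) = a * \<sigma> x"
  unfolding state_def by blast

lemma state_add: "state K u \<sigma> \<Longrightarrow> \<sigma> (x + y) = \<sigma> x + \<sigma> y"
  unfolding state_def by blast

lemma state_zero: "state K u \<sigma> \<Longrightarrow> \<sigma> 0 = 0"
  using state_add[of K u \<sigma> 0 0] by simp

lemma state_sum: "state K u \<sigma> \<Longrightarrow> \<sigma> (sum f S) = (\<Sum>i\<in>S. \<sigma> (f i))"
  by (induction S rule: infinite_finite_induct) (simp_all add: state_zero state_add)

context uhs
begin

lemma key:
  assumes hm: "hermitian_mat H n y"
  shows "(\<forall>c\<in>unital_cone H e. psd_on {..<n} (\<lambda>j l. hip H c (y j l)))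
     \<longleftrightarrow> (\<forall>\<sigma>. state H e \<sigma> \<longrightarrow> psd_on {..<n} (\<lambda>i j. \<sigma> (y i j)))"
proof
  assume A: "\<forall>c\<in>unital_cone H e. psd_on {..<n} (\<lambda>j l. hip H c (y j l))"
  have yy: "\<And>p r. p < n \<Longrightarrow> r < n \<Longrightarrow> hstar H (y p r) = y r p"
    using hm unfolding hermitian_mat_def by (metis star_star)
  show "\<forall>\<sigma>. state H e \<sigma> \<longrightarrow> psd_on {..<n} (\<lambda>i j. \<sigma> (y i j))"
  proof (intro allI impI)
    fix \<sigma> assume st: "state H e \<sigma>"
    show "psd_on {..<n} (\<lambda>i j. \<sigma> (y i j))"
      unfolding psd_on_def Let_def
    proof
      fix v :: "nat \<Rightarrow> complex"
      define X where "X = (\<Sum>p<n. \<Sum>r<n. hscal H (cnj (v p) * v r) (y p r))"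
      have sX: "\<sigma> X = (\<Sum>p<n. \<Sum>r<n. cnj (v p) * \<sigma> (y p r) * v r)"
        by (simp add: X_def state_sum[OF st] state_scal[OF st] ac_simps)
      have hX: "hstar H X = X"
      proof -
        have "hstar H X = (\<Sum>p<n. \<Sum>r<n. hscal H (v p * cnj (v r)) (hstar H (y p r)))"
          by (simp add: X_def star_sum star_scal)
        also have "\<dots> = (\<Sum>p<n. \<Sum>r<n. hscal H (v p * cnj (v r)) (y r p))"
          by (intro sum.cong refl) (simp add: yy)
        also have "\<dots> = (\<Sum>r<n. \<Sum>p<n. hscal H (v p * cnj (v r)) (y r p))" by (rule sum.swap)
        also have "\<dots> = X" by (simp add: X_def ac_simps)
        finally show ?thesis .
      qed
      have "X \<in> unital_cone H e"
      proof (rule dual2[OF hX])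
        fix c assume c: "c \<in> unital_cone H e"
        have P: "psd_on {..<n} (\<lambda>j l. hip H c (y j l))" using A c by blast
        have eq: "hip H c X = (\<Sum>p<n. \<Sum>r<n. cnj (cnj (v p)) * hip H c (y p r) * cnj (v r))"
          by (simp add: X_def ip_sum_right ip_scal_right ac_simps)
        have "Im (\<Sum>p<n. \<Sum>r<n. cnj (cnj (v p)) * hip H c (y p r) * cnj (v r)) = 0 \<and>
              0 \<le> Re (\<Sum>p<n. \<Sum>r<n. cnj (cnj (v p)) * hip H c (y p r) * cnj (v r))"
          using P unfolding psd_on_def Let_def by (drule_tac spec[where x="\<lambda>x. cnj (v x)"]) simp
        then show "Im (hip H c X) = 0 \<and> 0 \<le> Re (hip H c X)" using eq by simp
      qed
      then have "Im (\<sigma> X) = 0 \<and> 0 \<le> Re (\<sigma> X)" using st unfolding state_def by blast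
      then show "Im (\<Sum>p\<in>{..<n}. \<Sum>r\<in>{..<n}. cnj (v p) * \<sigma> (y p r) * v r) = 0 \<and>
          0 \<le> Re (\<Sum>p\<in>{..<n}. \<Sum>r\<in>{..<n}. cnj (v p) * \<sigma> (y p r) * v r)" using sX by simp
    qed
  qed
next
  assume B: "\<forall>\<sigma>. state H e \<sigma> \<longrightarrow> psd_on {..<n} (\<lambda>i j. \<sigma> (y i j))"
  show "\<forall>c\<in>unital_cone H e. psd_on {..<n} (\<lambda>j l. hip H c (y j l))"
  proof
    fix c assume c: "c \<in> unital_cone H e"
    show "psd_on {..<n} (\<lambda>j l. hip H c (y j l))"
    proof (cases "c = 0")
      case True then show ?thesis by (simp add: psd_on_def)
    next
      case False
      define \<kappa> where "\<kappa> = Re (hip H c e)"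
      have ch: "hstar H c = c" using c cone_iff by blast
      have k0: "0 \<le> \<kappa>" and cc: "Re (hip H c c) \<le> 2 * \<kappa>^2" using c by (auto simp: cone_iff \<kappa>_def)
      have kp: "0 < \<kappa>"
      proof (rule ccontr)
        assume "\<not> 0 < \<kappa>" then have "\<kappa> = 0" using k0 by simp
        then have "c = 0" using cc by (intro ip_self_zero) simp
        then show False using False by simp
      qed
      have ce: "hip H c e = of_real \<kappa>" using herm_real[OF ch he] by (simp add: complex_eq_iff \<kappa>_def)
      have ec: "hip H e c = of_real \<kappa>" using ce ip_sym[of e c] by simp
      define \<sigma> where "\<sigma> = (\<lambda>x. hip H x c / of_real \<kappa>)"
      have st: "state H e \<sigma>"
        unfolding state_def \<sigma>_def
        using ec kp dual1[OF _ c] by (auto simp: ip_add_left ip_scal_left add_divide_distrib)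
      have "psd_on {..<n} (\<lambda>i j. \<sigma> (y i j))" using B st by blast
      then have "psd_on {..<n} (\<lambda>i j. of_real \<kappa> * \<sigma> (y i j))" by (rule psd_scale) (use k0 in simp)
      then have "psd_on {..<n} (\<lambda>i j. hip H (y i j) c)" using kp by (simp add: \<sigma>_def)
      then have "psd_on {..<n} (\<lambda>i j. cnj (hip H (y i j) c))" by (rule psd_cnj)
      then show ?thesis by (simp add: ip_sym[symmetric])
    qed
  qed
qed

lemma polar_level1: "qpolar H (level1 (unital_cone H e)) = min_cone H e"
proof -
  have eq: "(n, y) \<in> qpolar H (level1 (unital_cone H e)) \<longleftrightarrow> (n, y) \<in> min_cone H e" for n y
  proof -
    have l: "(\<forall>(m, z)\<in>level1 (unital_cone H e). pairing_pos H m z n y)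
        \<longleftrightarrow> (\<forall>c\<in>unital_cone H e. psd_on {..<n} (\<lambda>j l. hip H c (y j l)))"
      unfolding level1_def using pairing_level1 by auto
    show ?thesis
    proof (cases "hermitian_mat H n y")
      case True
      then show ?thesis using key[OF True] l by (simp add: qpolar_def min_cone_def)
    next
      case False
      then show ?thesis by (simp add: qpolar_def min_cone_def)
    qed
  qed
  show ?thesis
  proof (rule set_eqI)
    fix p
    show "p \<in> qpolar H (level1 (unital_cone H e)) \<longleftrightarrow> p \<in> min_cone H e"
      using eq[of "fst p" "snd p"] by simp
  qed
qed

lemma wf_level1: "wfam (level1 (unital_cone H e))"
  by (auto simp: wfam_def level1_def mats_def hermitian_mat_def unital_cone_def hermitian_part_def)

end

theorem mainTheorem5:
  fixes H :: "('h::ab_group_add) hsp" and e :: 'h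
  assumes "unital_hilbert_space H e"
  shows "qpolar H (max_cone_bar H e) = min_cone H e
       \<and> qpolar_bar H (min_cone (conj_space H) e) = max_cone H e"
proof -
  have h1: "hilbert_star_space H" and h2: "hstar H e = e" and h3: "hnorm H e = 1"
    using assms by (auto simp: unital_hilbert_space_def hermitian_part_def)
  interpret uhs H e
    by (unfold_locales; rule h1 h2 h3)
  let ?L = "level1 (unital_cone H e)"
  have mb: "max_cone_bar H e = qpolar H (qpolar H ?L)"
    unfolding max_cone_bar_def cone_conj qpolar_eq ..
  have "qpolar H (max_cone_bar H e) = min_cone H e"
    unfolding mb triple[OF wf_level1] by (rule polar_level1)
  moreover have "qpolar_bar H (min_cone (conj_space H) e) = max_cone H e"
    unfolding min_conj max_cone_def polar_level1 ..
  ultimately show ?thesis by simp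
qed

end
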